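(* Let $\theta^0$ be a parameter vector at which Assumption 4 (GMFCQ, stated in the context) holds. If the first-order optimality condition (stated in the context) fails at $\theta^0$, then there exist a direction $D_\theta$ and positive constants $\epsilon_8,\epsilon_9$ such that $$\langle D_\theta,\nabla_\theta\mathcal{O}(\theta^0)\rangle<-\epsilon_8,\qquad \langle D_\theta,\nabla_\theta\text{dist}(b_{ij}(t,\theta^0),o_k)\rangle>\epsilon_9$$ for all $(i,j,k,t)$ with $\text{dist}(b_{ij}(t,\theta^0),o_k)=d_0$.
   Context: For a finite-dimensional parameter vector $\theta$ and $t\in[0,T]$, robot pieces $b_{ij}(t,\theta)\subset\mathbb{R}^3$ and obstacle pieces $o_k\subset\mathbb{R}^3$ are given (finitely many triples $(i,j,k)$) such that each $(t,\theta)\mapsto\text{dist}(b_{ij}(t,\theta),o_k)$ (shortest Euclidean distance) is differentiable; $d_0\ge0$ is a safe distance; $\mathcal{O}(\theta)$ is a differentiable cost. First-order optimality at $\theta^0$: for every direction $D_\theta$ with $\langle D_\theta,\nabla_\theta\text{dist}(b_{ij}(t,\theta^0),o_k)\rangle\ge0$ for all $(i,j,k,t)$ with $\text{dist}(b_{ij}(t,\theta^0),o_k)=d_0$, one has $\langle D_\theta,\nabla_\theta\mathcal{O}(\theta^0)\rangle\ge0$. Assumption 4 (GMFCQ at $\theta^0$): there exist a direction $D_\theta$ and $\epsilon_7>0$ with $\langle D_\theta,\nabla_\theta\text{dist}(b_{ij}(t,\theta^0),o_k)\rangle\ge\epsilon_7$ for all $(i,j,k,t)$ with $\text{dist}(b_{ij}(t,\theta^0),o_k)=d_0$.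 *)

theory Defs
  imports "HOL-Analysis.Analysis"
begin

definition grad :: "('a::real_inner \<Rightarrow> real) \<Rightarrow> 'a \<Rightarrow> 'a" where
  "grad f x = (SOME D. GDERIV f x :> D)"

definition piece_dist ::
  "('i \<Rightarrow> 'j \<Rightarrow> real \<Rightarrow> 'a \<Rightarrow> (real^3) set) \<Rightarrow> ('k \<Rightarrow> (real^3) set)
    \<Rightarrow> 'i \<Rightarrow> 'j \<Rightarrow> 'k \<Rightarrow> real \<Rightarrow> 'a \<Rightarrow> real" where
  "piece_dist b obs i j k t \<theta> = setdist (b i j t \<theta>) (obs k)"

end

theory Submission
  imports Defs
begin

theorem lemma8:
  fixes b :: "'i \<Rightarrow> 'j \<Rightarrow> real \<Rightarrow> 'a::euclidean_space \<Rightarrow> (real^3) set"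
    and obs :: "'k \<Rightarrow> (real^3) set"
    and P :: "('i \<times> 'j \<times> 'k) set"
    and T d0 :: real
    and Ocost :: "'a \<Rightarrow> real"
    and \<theta>0 :: 'a
  assumes finP: "finite P"
    and d0_nonneg: "0 \<le> d0"
    and dist_diff: "\<forall>(i,j,k)\<in>P. \<forall>t\<in>{0..T}. \<forall>\<theta>.
          (\<lambda>(s,\<phi>). piece_dist b obs i j k s \<phi>) differentiable (at (t,\<theta>) within ({0..T} \<times> UNIV))"
    and O_diff: "\<forall>\<theta>. Ocost differentiable (at \<theta>)"
    and GMFCQ: "\<exists>D \<epsilon>7. \<epsilon>7 > 0 \<and>
          (\<forall>(i,j,k)\<in>P. \<forall>t\<in>{0..T}. piece_dist b obs i j k t \<theta>0 = d0 \<longrightarrow>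
             inner D (grad (piece_dist b obs i j k t) \<theta>0) \<ge> \<epsilon>7)"
    and not_FOC: "\<not> (\<forall>D. (\<forall>(i,j,k)\<in>P. \<forall>t\<in>{0..T}. piece_dist b obs i j k t \<theta>0 = d0 \<longrightarrow>
             inner D (grad (piece_dist b obs i j k t) \<theta>0) \<ge> 0)
          \<longrightarrow> inner D (grad Ocost \<theta>0) \<ge> 0)"
  shows "\<exists>D \<epsilon>8 \<epsilon>9. \<epsilon>8 > 0 \<and> \<epsilon>9 > 0 \<and> inner D (grad Ocost \<theta>0) < - \<epsilon>8 \<and>
          (\<forall>(i,j,k)\<in>P. \<forall>t\<in>{0..T}. piece_dist b obs i j k t \<theta>0 = d0 \<longrightarrow>
             inner D (grad (piece_dist b obs i j k t) \<theta>0) > \<epsilon>9)"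
proof -
  let ?G = "\<lambda>i j k t. grad (piece_dist b obs i j k t) \<theta>0"
  let ?A = "\<lambda>i j k t. (i,j,k)\<in>P \<and> t\<in>{0..T} \<and> piece_dist b obs i j k t \<theta>0 = d0"
  obtain D1 where D1a: "\<And>i j k t. ?A i j k t \<Longrightarrow> inner D1 (?G i j k t) \<ge> 0"
    and D1b: "inner D1 (grad Ocost \<theta>0) < 0"
    using not_FOC by fastforce
  obtain D2 e7 where e7: "e7 > 0"
    and D2a: "\<And>i j k t. ?A i j k t \<Longrightarrow> inner D2 (?G i j k t) \<ge> e7"
    using GMFCQ by fastforce
  define c where "c = - inner D1 (grad Ocost \<theta>0)"
  define a where "a = inner D2 (grad Ocost \<theta>0)"
  define s where "s = c / (2 * (\<bar>a\<bar> + 1))"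
  have c0: "c > 0" using D1b c_def by simp
  have s0: "s > 0" using c0 s_def by (simp add: add_pos_nonneg)
  have sa: "s * a \<le> c / 2"
  proof -
    have "s * a \<le> s * (\<bar>a\<bar> + 1)" using s0 by (intro mult_left_mono) auto
    also have "\<dots> = c / 2" unfolding s_def by (simp add: field_simps add_pos_nonneg)
    finally show ?thesis .
  qed
  define D where "D = D1 + s *\<^sub>R D2"
  have "inner D (grad Ocost \<theta>0) = - c + s * a"
    unfolding D_def c_def a_def by (simp add: inner_add_left)
  hence g: "inner D (grad Ocost \<theta>0) < - (c/4)" using sa c0 by linarith
  have h: "inner D (?G i j k t) > s * e7 / 2" if "?A i j k t" for i j k t
  proof -
    have "inner D (?G i j k t) = inner D1 (?G i j k t) + s * inner D2 (?G i j k t)"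
      unfolding D_def by (simp add: inner_add_left)
    moreover have "s * inner D2 (?G i j k t) \<ge> s * e7"
      using D2a[OF that] s0 by (intro mult_left_mono) auto
    moreover have "s * e7 > 0" using s0 e7 by simp
    ultimately show ?thesis using D1a[OF that] by linarith
  qed
  show ?thesis
    apply (rule exI[of _ D], rule exI[of _ "c/4"], rule exI[of _ "s * e7 / 2"])
    using c0 s0 e7 g h by auto
qed

end
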